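(* Let $s\ge 1$, let $1\le p\le\infty$, and let $d^p$ be the $\ell^p$-votewise distance built from any family of maps $d_C:L(C)\times L(C)\to[0,\infty)$ satisfying $d_C(\rho,\rho)=0$ and the triangle inequality. Then $\mathcal R(\mathrm{Unam}^s,d^p)$ is homogeneous: $\mathcal R(\mathrm{Unam}^s,d^p)(E)=\mathcal R(\mathrm{Unam}^s,d^p)(E')$ whenever $E\sim_H E'$.
   Context: Elections: $E=(C,V,\pi)$ with $C$ a finite subset of a countably infinite set $C^*$, $V$ a finite nonempty subset of a countably infinite set $V^*$, $\pi:V\to L(C)$ ($L(C)$ = strict linear orders of $C$, $L_s(C)$ = strict linear orders of $s$ distinct elements of $C$). Homogeneity relation $\sim_H$: same candidate set $C$ and $|\pi^{-1}(\rho)|/|V|=|\pi'^{-1}(\rho)|/|V'|$ for all $\rho\in L(C)$. $\mathrm{Unam}^s$ is the $s$-consensus whose domain consists of the elections with $|C|\ge s$ in which all voters rank the same $s$ candidates, in the same order, in their top $s$ positions, the consensus value being this common $s$-ranking; $\mathrm{Unam}^s_r$ is the set of elections with value $r$. Votewise $\ell^p$ distance: fix an enumeration of $V^*$; for $E=(C,V,\pi),E'=(C,V,\pi')$ with $V=\{v_1<\dots<v_n\}$, $d^p(E,E')=\|(d_C(\pi(v_1),\pi'(v_1)),\dots,d_C(\pi(v_n),\pi'(v_n)))\|_p$, and $d^p(E,E')=\infty$ if the candidate sets or voter sets differ. $d(E,A)=\inf_{F\in A}d(E,F)$ ($\infty$ if $A=\emptyset$); $\mathcal R(\mathcal K,d)(E)$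 is the set of $r\in L_s(C^* )$ with $d(E,\mathcal K_r)=\inf_{r'\in L_s(C^* )}d(E,\mathcal K_{r'})$. *)

theory Defs
  imports "HOL-Library.Extended_Real" "HOL-Library.Countable"
begin

text \<open>A strict linear order of C is represented by the list of the elements of C
  from best to worst (a distinct list whose set is C).\<close>

type_synonym ('c, 'v) election = "'c set \<times> 'v set \<times> ('v \<Rightarrow> 'c list)"

definition linord :: "'c set \<Rightarrow> 'c list set" where
  "linord C = {xs. distinct xs \<and> set xs = C}"

definition linord_s :: "nat \<Rightarrow> 'c list set" where
  "linord_s s = {xs. distinct xs \<and> length xs = s}"

definition is_election :: "('c, 'v) election \<Rightarrow> bool" where
  "is_election E = (case E of (C, V, \<pi>) \<Rightarrow>
     finite C \<and> finite V \<and> V \<noteq> {} \<and> (\<forall>v\<in>V. \<pi> v \<in> linord C))"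

definition hom_rel :: "('c, 'v) election \<Rightarrow> ('c, 'v) election \<Rightarrow> bool" where
  "hom_rel E E' = (case E of (C, V, \<pi>) \<Rightarrow> case E' of (C', V', \<pi>') \<Rightarrow>
     is_election E \<and> is_election E' \<and> C = C' \<and>
     (\<forall>\<rho>\<in>linord C. real (card {v\<in>V. \<pi> v = \<rho>}) / real (card V)
                    = real (card {v\<in>V'. \<pi>' v = \<rho>}) / real (card V')))"

definition unam :: "nat \<Rightarrow> 'c list \<Rightarrow> ('c, 'v) election set" where
  "unam s r = {(C, V, \<pi>). is_election (C, V, \<pi>) \<and> s \<le> card C \<and> (\<forall>v\<in>V. take s (\<pi> v) = r)}"

text \<open>Since the l^p norm is invariant under permutation of coordinates, the fixed enumeration of
  the voter universe is irrelevant and we sum/maximize over V directly.\<close>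
definition votewise_dist ::
  "('c set \<Rightarrow> 'c list \<Rightarrow> 'c list \<Rightarrow> real) \<Rightarrow> ereal \<Rightarrow> ('c, 'v) election \<Rightarrow> ('c, 'v) election \<Rightarrow> ereal" where
  "votewise_dist dC p E E' = (case E of (C, V, \<pi>) \<Rightarrow> case E' of (C', V', \<pi>') \<Rightarrow>
     if C = C' \<and> V = V' then
       (if p = \<infinity> then ereal (Max ((\<lambda>v. dC C (\<pi> v) (\<pi>' v)) ` V))
        else ereal ((\<Sum>v\<in>V. dC C (\<pi> v) (\<pi>' v) powr real_of_ereal p) powr (1 / real_of_ereal p)))
     else \<infinity>)"

definition set_dist :: "('e \<Rightarrow> 'e \<Rightarrow> ereal) \<Rightarrow> 'e \<Rightarrow> 'e set \<Rightarrow> ereal" where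
  "set_dist d E A = (INF F\<in>A. d E F)"

definition dr_rule :: "nat \<Rightarrow> ('c list \<Rightarrow> 'e set) \<Rightarrow> ('e \<Rightarrow> 'e \<Rightarrow> ereal) \<Rightarrow> 'e \<Rightarrow> 'c list set" where
  "dr_rule s K d E = {r \<in> linord_s s.
     set_dist d E (K r) = (INF r'\<in>linord_s s. set_dist d E (K r'))}"

end

theory Submission
  imports Defs
begin

lemma finite_linord: "finite C \<Longrightarrow> finite (linord C)"
  by (rule finite_subset[OF _ finite_subset_distinct[of C]]) (auto simp: linord_def)

definition Kset :: "nat \<Rightarrow> 'c set \<Rightarrow> 'c list \<Rightarrow> 'c list set" where
  "Kset s C r = {\<sigma>\<in>linord C. take s \<sigma> = r}"

lemma Kset_finite: "finite C \<Longrightarrow> finite (Kset s C r)"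
  by (simp add: Kset_def finite_linord)

lemma Kset_ne: assumes "finite C" "r \<in> linord_s s" "set r \<subseteq> C"
  shows "Kset s C r \<noteq> {}"
proof -
  obtain ys where ys: "set ys = C - set r" "distinct ys"
    using finite_distinct_list[of "C - set r"] assms(1) by auto
  have "r @ ys \<in> Kset s C r"
    using assms ys by (auto simp: Kset_def linord_def linord_s_def)
  thus ?thesis by auto
qed

lemma Kset_sub: "\<sigma> \<in> Kset s C r \<Longrightarrow> set r \<subseteq> C"
  unfolding Kset_def linord_def by (auto dest: in_set_takeD)

definition mm :: "('c set \<Rightarrow> 'c list \<Rightarrow> 'c list \<Rightarrow> real) \<Rightarrow> nat \<Rightarrow> 'c set \<Rightarrow> 'c list \<Rightarrow> 'c list \<Rightarrow> real" where
  "mm dC s C r \<rho> = Min ((\<lambda>\<sigma>. dC C \<rho> \<sigma>) ` Kset s C r)"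

definition vw :: "ereal \<Rightarrow> 'v set \<Rightarrow> ('v \<Rightarrow> real) \<Rightarrow> ereal" where
  "vw p V g = (if p = \<infinity> then ereal (Max (g ` V))
        else ereal ((\<Sum>v\<in>V. g v powr real_of_ereal p) powr (1 / real_of_ereal p)))"

lemma vw_mono:
  assumes "finite V" "V \<noteq> {}" "\<And>v. v \<in> V \<Longrightarrow> 0 \<le> g v" "\<And>v. v \<in> V \<Longrightarrow> g v \<le> h v"
    "1 \<le> p"
  shows "vw p V g \<le> vw p V h"
proof (cases "p = \<infinity>")
  case True
  have "Max (g ` V) \<in> g ` V" using assms by simp
  then obtain v where v: "v \<in> V" "Max (g ` V) = g v" by auto
  have "h v \<le> Max (h ` V)" using assms(1) v(1) by (intro Max_ge) auto
  hence "g v \<le> Max (h ` V)" using assms(4)[OF v(1)] by linarith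
  thus ?thesis using True v by (simp add: vw_def)
next
  case False
  have q: "real_of_ereal p \<ge> 1" using assms(5) False
    by (cases p) auto
  have "(\<Sum>v\<in>V. g v powr real_of_ereal p) \<le> (\<Sum>v\<in>V. h v powr real_of_ereal p)"
    using assms q by (intro sum_mono powr_mono2) auto
  moreover have "0 \<le> (\<Sum>v\<in>V. g v powr real_of_ereal p)" by (intro sum_nonneg) auto
  ultimately show ?thesis using False q by (simp add: vw_def powr_mono2)
qed

lemma vd_eq: "votewise_dist dC p (C, V, \<pi>) (C, V, \<pi>') = vw p V (\<lambda>v. dC C (\<pi> v) (\<pi>' v))"
  by (simp add: votewise_dist_def vw_def)

lemma vw_cong: "(\<And>v. v \<in> V \<Longrightarrow> g v = h v) \<Longrightarrow> vw p V g = vw p V h"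
  unfolding vw_def by (simp cong: image_cong sum.cong)

lemma dist_formula:
  assumes el: "is_election (C, V, \<pi>)"
    and nn: "\<And>\<rho> \<sigma>. \<rho> \<in> linord C \<Longrightarrow> \<sigma> \<in> linord C \<Longrightarrow> 0 \<le> dC C \<rho> \<sigma>"
    and p: "1 \<le> p" and r: "r \<in> linord_s s"
  shows "set_dist (votewise_dist dC p) (C, V, \<pi>) (unam s r)
       = (if set r \<subseteq> C then vw p V (\<lambda>v. mm dC s C r (\<pi> v)) else \<infinity>)"
proof -
  have fC: "finite C" and fV: "finite V" and Vne: "V \<noteq> {}" and pil: "\<And>v. v \<in> V \<Longrightarrow> \<pi> v \<in> linord C"
    using el by (auto simp: is_election_def)
  have fK: "finite (Kset s C r)" using fC by (rule Kset_finite)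
  have mm_le: "mm dC s C r \<rho> \<le> dC C \<rho> \<sigma>" if "\<sigma> \<in> Kset s C r" for \<rho> \<sigma>
    unfolding mm_def using fK that by (intro Min_le) auto
  show ?thesis
  proof (cases "set r \<subseteq> C")
    case True
    have Kne: "Kset s C r \<noteq> {}" using Kset_ne[OF fC r True] .
    have ex: "\<exists>\<sigma>. \<sigma> \<in> Kset s C r \<and> dC C \<rho> \<sigma> = mm dC s C r \<rho>" for \<rho>
    proof -
      have "mm dC s C r \<rho> \<in> (\<lambda>\<sigma>. dC C \<rho> \<sigma>) ` Kset s C r"
        unfolding mm_def using fK Kne by (intro Min_in) auto
      thus ?thesis by auto
    qed
    define sel where "sel \<rho> = (SOME \<sigma>. \<sigma> \<in> Kset s C r \<and> dC C \<rho> \<sigma> = mm dC s C r \<rho>)" for \<rho>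
    have sel: "sel \<rho> \<in> Kset s C r" "dC C \<rho> (sel \<rho>) = mm dC s C r \<rho>" for \<rho>
      using someI_ex[OF ex[of \<rho>]] unfolding sel_def by auto
    have mm_nn: "0 \<le> mm dC s C r (\<pi> v)" if "v \<in> V" for v
      using nn[OF pil[OF that], of "sel (\<pi> v)"] sel[of "\<pi> v"] by (auto simp: Kset_def)
    define F0 where "F0 = (C, V, \<lambda>v. sel (\<pi> v))"
    have "card (set r) = s" using r by (auto simp: linord_s_def distinct_card)
    hence scard: "s \<le> card C" using True fC card_mono by metis
    have F0: "F0 \<in> unam s r"
      using el sel scard unfolding F0_def unam_def is_election_def by (auto simp: Kset_def)
    have dF0: "votewise_dist dC p (C, V, \<pi>) F0 = vw p V (\<lambda>v. mm dC s C r (\<pi> v))"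
      unfolding F0_def vd_eq by (rule vw_cong) (simp add: sel)
    have low: "vw p V (\<lambda>v. mm dC s C r (\<pi> v)) \<le> votewise_dist dC p (C, V, \<pi>) F" if "F \<in> unam s r" for F
    proof -
      obtain C' V' \<pi>' where F: "F = (C', V', \<pi>')" by (cases F) auto
      show ?thesis
      proof (cases "C' = C \<and> V' = V")
        case True
        hence K: "\<pi>' v \<in> Kset s C r" if "v \<in> V" for v
          using \<open>F \<in> unam s r\<close> that unfolding F unam_def is_election_def Kset_def by auto
        show ?thesis unfolding F using True vd_eq
          by (simp add: vd_eq) (rule vw_mono[OF fV Vne mm_nn mm_le[OF K] p])
      next
        case False
        thus ?thesis unfolding F by (auto simp: votewise_dist_def)
      qed
    qed
    have "set_dist (votewise_dist dC p) (C, V, \<pi>) (unam s r) = vw p V (\<lambda>v. mm dC s C r (\<pi> v))"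
      unfolding set_dist_def
    proof (rule antisym)
      show "(INF F\<in>unam s r. votewise_dist dC p (C, V, \<pi>) F) \<le> vw p V (\<lambda>v. mm dC s C r (\<pi> v))"
        using INF_lower[OF F0, of "votewise_dist dC p (C, V, \<pi>)"] dF0 by simp
      show "vw p V (\<lambda>v. mm dC s C r (\<pi> v)) \<le> (INF F\<in>unam s r. votewise_dist dC p (C, V, \<pi>) F)"
        by (rule INF_greatest) (rule low)
    qed
    thus ?thesis using True by simp
  next
    case False
    have inf: "votewise_dist dC p (C, V, \<pi>) F = \<infinity>" if "F \<in> unam s r" for F
    proof -
      obtain C' V' \<pi>' where F: "F = (C', V', \<pi>')" by (cases F) auto
      have "\<not> (C' = C \<and> V' = V)"
      proof
        assume h: "C' = C \<and> V' = V"
        obtain v where "v \<in> V" using Vne by auto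
        hence "\<pi>' v \<in> Kset s C r"
          using \<open>F \<in> unam s r\<close> h unfolding F unam_def is_election_def Kset_def by auto
        thus False using Kset_sub False by blast
      qed
      thus ?thesis unfolding F by (auto simp: votewise_dist_def)
    qed
    have "\<infinity> \<le> set_dist (votewise_dist dC p) (C, V, \<pi>) (unam s r)"
      unfolding set_dist_def by (rule INF_greatest) (simp add: inf)
    hence "set_dist (votewise_dist dC p) (C, V, \<pi>) (unam s r) = \<infinity>" by simp
    thus ?thesis using False by simp
  qed
qed

definition wf :: "'v set \<Rightarrow> ('v \<Rightarrow> 'c list) \<Rightarrow> 'c list \<Rightarrow> real" where
  "wf V \<pi> \<rho> = real (card {v\<in>V. \<pi> v = \<rho>}) / real (card V)"

definition Gf :: "('c set \<Rightarrow> 'c list \<Rightarrow> 'c list \<Rightarrow> real) \<Rightarrow> ereal \<Rightarrow> nat \<Rightarrow> 'c set \<Rightarrow> ('c list \<Rightarrow> real) \<Rightarrow> 'c list \<Rightarrow> real" where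
  "Gf dC p s C w r = (if p = \<infinity> then Max (mm dC s C r ` {\<rho>\<in>linord C. w \<rho> \<noteq> 0})
     else (\<Sum>\<rho>\<in>linord C. w \<rho> * mm dC s C r \<rho> powr real_of_ereal p))"

lemma Gf_cong: "(\<And>\<rho>. \<rho> \<in> linord C \<Longrightarrow> w \<rho> = w' \<rho>) \<Longrightarrow> Gf dC p s C w r = Gf dC p s C w' r"
proof -
  assume h: "\<And>\<rho>. \<rho> \<in> linord C \<Longrightarrow> w \<rho> = w' \<rho>"
  hence "{\<rho>\<in>linord C. w \<rho> \<noteq> 0} = {\<rho>\<in>linord C. w' \<rho> \<noteq> 0}" by auto
  thus ?thesis unfolding Gf_def using h by (simp cong: sum.cong)
qed

definition Hf :: "ereal \<Rightarrow> nat \<Rightarrow> real \<Rightarrow> ereal" where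
  "Hf p N x = (if p = \<infinity> then ereal x else ereal ((real N * x) powr (1 / real_of_ereal p)))"

lemma vw_G:
  assumes el: "is_election (C, V, \<pi>)"
  shows "vw p V (\<lambda>v. mm dC s C r (\<pi> v)) = Hf p (card V) (Gf dC p s C (wf V \<pi>) r)"
proof -
  have fC: "finite C" and fV: "finite V" and Vne: "V \<noteq> {}" and pil: "\<And>v. v \<in> V \<Longrightarrow> \<pi> v \<in> linord C"
    using el by (auto simp: is_election_def)
  have cV: "real (card V) > 0" using fV Vne by (simp add: card_gt_0_iff)
  show ?thesis
  proof (cases "p = \<infinity>")
    case True
    have "\<pi> ` V = {\<rho>\<in>linord C. wf V \<pi> \<rho> \<noteq> 0}"
    proof (intro equalityI subsetI)
      fix \<rho> assume "\<rho> \<in> \<pi> ` V"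
      then obtain v where v: "v \<in> V" "\<rho> = \<pi> v" by auto
      hence "{v\<in>V. \<pi> v = \<rho>} \<noteq> {}" by auto
      hence "card {v\<in>V. \<pi> v = \<rho>} \<noteq> 0" using fV by simp
      thus "\<rho> \<in> {\<rho>\<in>linord C. wf V \<pi> \<rho> \<noteq> 0}" using v pil cV by (auto simp: wf_def)
    next
      fix \<rho> assume "\<rho> \<in> {\<rho>\<in>linord C. wf V \<pi> \<rho> \<noteq> 0}"
      hence "card {v\<in>V. \<pi> v = \<rho>} \<noteq> 0" by (auto simp: wf_def)
      hence "{v\<in>V. \<pi> v = \<rho>} \<noteq> {}" by (metis card.empty)
      thus "\<rho> \<in> \<pi> ` V" by auto
    qed
    hence "(\<lambda>v. mm dC s C r (\<pi> v)) ` V = mm dC s C r ` {\<rho>\<in>linord C. wf V \<pi> \<rho> \<noteq> 0}"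
      by (simp add: image_image[symmetric])
    thus ?thesis using True by (simp add: vw_def Hf_def Gf_def)
  next
    case False
    define q where "q = real_of_ereal p"
    have "(\<Sum>v\<in>V. mm dC s C r (\<pi> v) powr q)
        = (\<Sum>\<rho>\<in>linord C. \<Sum>v\<in>{v\<in>V. \<pi> v = \<rho>}. mm dC s C r (\<pi> v) powr q)"
      using fV finite_linord[OF fC] pil by (intro sum.group[symmetric]) auto
    also have "\<dots> = (\<Sum>\<rho>\<in>linord C. real (card {v\<in>V. \<pi> v = \<rho>}) * mm dC s C r \<rho> powr q)"
      by (intro sum.cong refl) simp
    also have "\<dots> = real (card V) * (\<Sum>\<rho>\<in>linord C. wf V \<pi> \<rho> * mm dC s C r \<rho> powr q)"
      using cV by (simp add: sum_distrib_left wf_def)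
    finally show ?thesis using False by (simp add: vw_def Hf_def Gf_def q_def)
  qed
qed

lemma Hf_le:
  assumes "N > 0" "1 \<le> p" "p \<noteq> \<infinity> \<Longrightarrow> 0 \<le> x" "p \<noteq> \<infinity> \<Longrightarrow> 0 \<le> y"
  shows "Hf p N x \<le> Hf p N y \<longleftrightarrow> x \<le> y"
proof (cases "p = \<infinity>")
  case True thus ?thesis by (simp add: Hf_def)
next
  case False
  have q: "real_of_ereal p \<ge> 1" using assms(2) False by (cases p) auto
  have e: "1 / real_of_ereal p > 0" using q by simp
  have x: "0 \<le> real N * x" "0 \<le> real N * y" using assms False by auto
  have "(real N * x) powr (1 / real_of_ereal p) \<le> (real N * y) powr (1 / real_of_ereal p) \<longleftrightarrow> real N * x \<le> real N * y"
  proof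
    assume h: "(real N * x) powr (1 / real_of_ereal p) \<le> (real N * y) powr (1 / real_of_ereal p)"
    show "real N * x \<le> real N * y"
    proof (rule ccontr)
      assume "\<not> real N * x \<le> real N * y"
      hence "(real N * y) powr (1 / real_of_ereal p) < (real N * x) powr (1 / real_of_ereal p)"
        using x e by (intro powr_less_mono2) auto
      thus False using h by simp
    qed
  next
    assume "real N * x \<le> real N * y"
    thus "(real N * x) powr (1 / real_of_ereal p) \<le> (real N * y) powr (1 / real_of_ereal p)"
      using x e by (intro powr_mono2) auto
  qed
  also have "\<dots> \<longleftrightarrow> x \<le> y" using assms(1) by simp
  finally show ?thesis using False by (simp add: Hf_def)
qed

lemma Gf_nn: "p \<noteq> \<infinity> \<Longrightarrow> Gf dC p s C (wf V \<pi>) r \<ge> 0"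
  unfolding Gf_def wf_def by (auto intro!: sum_nonneg)

lemma dr_char: "dr_rule s K d E = {r\<in>linord_s s. \<forall>r'\<in>linord_s s. set_dist d E (K r) \<le> set_dist d E (K r')}"
  unfolding dr_rule_def
  by (auto intro: INF_lower intro!: antisym INF_greatest)

lemma cmp:
  assumes el: "is_election (C, V, \<pi>)"
    and nn: "\<And>\<rho> \<sigma>. \<rho> \<in> linord C \<Longrightarrow> \<sigma> \<in> linord C \<Longrightarrow> 0 \<le> dC C \<rho> \<sigma>"
    and p: "1 \<le> p" and r: "r \<in> linord_s s" and r': "r' \<in> linord_s s"
  shows "set_dist (votewise_dist dC p) (C, V, \<pi>) (unam s r) \<le> set_dist (votewise_dist dC p) (C, V, \<pi>) (unam s r')
     \<longleftrightarrow> (set r' \<subseteq> C \<longrightarrow> set r \<subseteq> C \<and> Gf dC p s C (wf V \<pi>) r \<le> Gf dC p s C (wf V \<pi>) r')"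
proof -
  have fV: "finite V" and Vne: "V \<noteq> {}" using el by (auto simp: is_election_def)
  have N: "card V > 0" using fV Vne by (simp add: card_gt_0_iff)
  let ?G = "Gf dC p s C (wf V \<pi>)"
  have d1: "set_dist (votewise_dist dC p) (C, V, \<pi>) (unam s r) = (if set r \<subseteq> C then Hf p (card V) (?G r) else \<infinity>)"
    using dist_formula[where dC=dC, OF el nn p r] vw_G[OF el] by simp
  have d2: "set_dist (votewise_dist dC p) (C, V, \<pi>) (unam s r') = (if set r' \<subseteq> C then Hf p (card V) (?G r') else \<infinity>)"
    using dist_formula[where dC=dC, OF el nn p r'] vw_G[OF el] by simp
  have H: "Hf p (card V) (?G r) \<le> Hf p (card V) (?G r') \<longleftrightarrow> ?G r \<le> ?G r'"
    using N p Gf_nn by (intro Hf_le) auto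
  have fin: "Hf p (card V) x \<noteq> \<infinity>" for x by (simp add: Hf_def)
  show ?thesis unfolding d1 d2 using H fin by (auto simp: top_unique[symmetric])
qed

theorem corollary6p12:
  fixes dC :: "'c::countable set \<Rightarrow> 'c list \<Rightarrow> 'c list \<Rightarrow> real"
    and p :: ereal and s :: nat
    and E E' :: "('c, 'v::countable) election"
  assumes "infinite (UNIV :: 'c set)" and "infinite (UNIV :: 'v set)"
    and "1 \<le> s"
    and "1 \<le> p"
    and "\<And>C \<rho> \<sigma>. finite C \<Longrightarrow> \<rho> \<in> linord C \<Longrightarrow> \<sigma> \<in> linord C \<Longrightarrow> 0 \<le> dC C \<rho> \<sigma>"
    and "\<And>C \<rho>. finite C \<Longrightarrow> \<rho> \<in> linord C \<Longrightarrow> dC C \<rho> \<rho> = 0"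
    and "\<And>C \<rho> \<sigma> \<tau>. finite C \<Longrightarrow> \<rho> \<in> linord C \<Longrightarrow> \<sigma> \<in> linord C \<Longrightarrow> \<tau> \<in> linord C \<Longrightarrow>
           dC C \<rho> \<tau> \<le> dC C \<rho> \<sigma> + dC C \<sigma> \<tau>"
    and "hom_rel E E'"
  shows "dr_rule s (unam s) (votewise_dist dC p) E = dr_rule s (unam s) (votewise_dist dC p) E'"
proof -
  obtain C V \<pi> where E: "E = (C, V, \<pi>)" by (cases E) auto
  obtain C' V' \<pi>' where E': "E' = (C', V', \<pi>')" by (cases E') auto
  have el: "is_election (C, V, \<pi>)" and el': "is_election (C, V', \<pi>')" and CC: "C' = C"
    and w: "\<And>\<rho>. \<rho> \<in> linord C \<Longrightarrow> wf V \<pi> \<rho> = wf V' \<pi>' \<rho>"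
    using assms(8) unfolding E E' hom_rel_def wf_def by auto
  have fC: "finite C" using el by (simp add: is_election_def)
  have nn: "\<And>\<rho> \<sigma>. \<rho> \<in> linord C \<Longrightarrow> \<sigma> \<in> linord C \<Longrightarrow> 0 \<le> dC C \<rho> \<sigma>"
    using assms(5) fC by blast
  have G: "Gf dC p s C (wf V \<pi>) = Gf dC p s C (wf V' \<pi>')"
    by (rule ext) (rule Gf_cong[OF w])
  show ?thesis
    unfolding E E' CC dr_char
    using cmp[where dC=dC, OF el nn assms(4)] cmp[where dC=dC, OF el' nn assms(4)] G by auto
qed

end
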